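(* Let $N\ge 2$ be an integer and let $\boldsymbol{A}=(A_1,\dots,A_N)$, $\boldsymbol{B}=(B_1,\dots,B_N)$ be probability vectors ($A_i,B_i\ge 0$, $\sum_iA_i=\sum_iB_i=1$), and put $S_i=A_i+B_i$. If $S_i>1$ for some $i$, then no joint selection probability matrix achieves loss $L=0$. Moreover, if $\max_i S_i=S_N>1$, then $$L_{\min}=\frac{N}{2(N-1)}(S_N-1)^2,$$ and this minimum is attained by the matrix $\tilde{\boldsymbol P}=(\tilde p_{i,j})$ given by $\tilde p_{i,j}=0$ if $i\ne N$ and $j\ne N$, $\tilde p_{i,N}=A_i+\epsilon$ for $i=1,\dots,N-1$, $\tilde p_{N,j}=B_j+\epsilon$ for $j=1,\dots,N-1$, $\tilde p_{N,N}=0$, where $\epsilon=\frac{S_N-1}{2(N-1)}$.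
   Context: A joint selection probability matrix is an $N\times N$ real matrix $\boldsymbol{P}=(p_{i,j})$ with $p_{i,i}=0$ for all $i$, $p_{i,j}\ge 0$ for all $i,j$, and $\sum_{i,j}p_{i,j}=1$. The satisfied preferences are $\pi_A(i)=\sum_j p_{i,j}$ and $\pi_B(j)=\sum_i p_{i,j}$, the loss is $L(\boldsymbol P)=\sum_i(\pi_A(i)-A_i)^2+\sum_j(\pi_B(j)-B_j)^2$, and $L_{\min}$ is the minimum of $L$ over all joint selection probability matrices. *)

theory Defs
  imports Main "HOL.Real"
begin

text \<open>Indices range over {1..N}; matrices are functions nat \<Rightarrow> nat \<Rightarrow> real,
  vectors are functions nat \<Rightarrow> real (values outside {1..N} are irrelevant).\<close>

definition jsp_matrix :: "nat \<Rightarrow> (nat \<Rightarrow> nat \<Rightarrow> real) \<Rightarrow> bool" where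
  "jsp_matrix N P \<longleftrightarrow>
     (\<forall>i\<in>{1..N}. P i i = 0) \<and>
     (\<forall>i\<in>{1..N}. \<forall>j\<in>{1..N}. P i j \<ge> 0) \<and>
     (\<Sum>i=1..N. \<Sum>j=1..N. P i j) = 1"

definition piA :: "nat \<Rightarrow> (nat \<Rightarrow> nat \<Rightarrow> real) \<Rightarrow> nat \<Rightarrow> real" where
  "piA N P i = (\<Sum>j=1..N. P i j)"

definition piB :: "nat \<Rightarrow> (nat \<Rightarrow> nat \<Rightarrow> real) \<Rightarrow> nat \<Rightarrow> real" where
  "piB N P j = (\<Sum>i=1..N. P i j)"

definition loss :: "nat \<Rightarrow> (nat \<Rightarrow> real) \<Rightarrow> (nat \<Rightarrow> real) \<Rightarrow> (nat \<Rightarrow> nat \<Rightarrow> real) \<Rightarrow> real" where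
  "loss N A B P = (\<Sum>i=1..N. (piA N P i - A i)^2) + (\<Sum>j=1..N. (piB N P j - B j)^2)"

definition Lmin :: "nat \<Rightarrow> (nat \<Rightarrow> real) \<Rightarrow> (nat \<Rightarrow> real) \<Rightarrow> real" where
  "Lmin N A B = Inf {loss N A B P | P. jsp_matrix N P}"

end

theory Submission
  imports Defs
begin

lemma cs_sum:
  fixes d :: "nat \<Rightarrow> real"
  assumes "finite I" "card I > 0"
  shows "(\<Sum>i\<in>I. d i)^2 \<le> real (card I) * (\<Sum>i\<in>I. (d i)^2)"
proof -
  define c where "c = real (card I)"
  define s where "s = (\<Sum>i\<in>I. d i)"
  define m where "m = s / c"
  have cpos: "c > 0" using assms c_def by simp
  have "0 \<le> (\<Sum>i\<in>I. (d i - m)^2)" by (simp add: sum_nonneg)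
  also have "\<dots> = (\<Sum>i\<in>I. (d i)^2 - (2 * m) * d i + m^2)"
    by (simp add: power2_diff algebra_simps)
  also have "\<dots> = (\<Sum>i\<in>I. (d i)^2) - (\<Sum>i\<in>I. (2 * m) * d i) + c * m^2"
    by (simp add: sum.distrib sum_subtractf c_def)
  also have "\<dots> = (\<Sum>i\<in>I. (d i)^2) - 2 * m * s + c * m^2"
    by (simp add: sum_distrib_left[symmetric] s_def)
  also have "\<dots> = (\<Sum>i\<in>I. (d i)^2) - s^2 / c"
    using cpos by (simp add: m_def field_simps power2_eq_square)
  finally have "s^2 / c \<le> (\<Sum>i\<in>I. (d i)^2)" by simp
  then show ?thesis using cpos by (simp add: s_def c_def field_simps)
qed

lemma row_col_le:
  assumes "jsp_matrix N P" "k \<in> {1..N}"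
  shows "piA N P k + piB N P k \<le> 1"
proof -
  have diag: "\<forall>i\<in>{1..N}. P i i = 0" and nn: "\<forall>i\<in>{1..N}. \<forall>j\<in>{1..N}. P i j \<ge> 0"
    and tot: "(\<Sum>i=1..N. \<Sum>j=1..N. P i j) = 1" using assms(1) unfolding jsp_matrix_def by auto
  have fin: "finite ({1..N} - {k})" by simp
  have "(\<Sum>i=1..N. \<Sum>j=1..N. P i j) = (\<Sum>j=1..N. P k j) + (\<Sum>i\<in>{1..N}-{k}. \<Sum>j=1..N. P i j)"
    using assms(2) by (subst sum.remove[of "{1..N}" k]) auto
  moreover have "(\<Sum>i\<in>{1..N}-{k}. P i k) \<le> (\<Sum>i\<in>{1..N}-{k}. \<Sum>j=1..N. P i j)"
  proof (rule sum_mono)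
    fix i assume "i \<in> {1..N}-{k}"
    then show "P i k \<le> (\<Sum>j=1..N. P i j)"
      using nn assms(2) by (intro member_le_sum) auto
  qed
  moreover have "piB N P k = P k k + (\<Sum>i\<in>{1..N}-{k}. P i k)"
    unfolding piB_def using assms(2) by (subst sum.remove[of "{1..N}" k]) auto
  moreover have "P k k = 0" using diag assms(2) by auto
  ultimately show ?thesis using tot unfolding piA_def by linarith
qed

lemma total_piA:
  "(\<Sum>i=1..N. piA N P i) = (\<Sum>i=1..N. \<Sum>j=1..N. P i j)"
  unfolding piA_def by simp

lemma total_piB:
  "(\<Sum>j=1..N. piB N P j) = (\<Sum>i=1..N. \<Sum>j=1..N. P i j)"
  unfolding piB_def by (rule sum.swap)

lemma split_last:
  fixes f :: "nat \<Rightarrow> real"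
  assumes "N \<ge> 1"
  shows "(\<Sum>i=1..N. f i) = f N + (\<Sum>i\<in>{1..<N}. f i)"
proof -
  have "{1..N} = insert N {1..<N}" using assms by auto
  then show ?thesis by simp
qed

lemma lower_bound:
  fixes N :: nat and A B :: "nat \<Rightarrow> real"
  assumes N2: "N \<ge> 2"
    and Asum: "(\<Sum>i=1..N. A i) = 1" and Bsum: "(\<Sum>i=1..N. B i) = 1"
    and S: "A N + B N > 1"
    and P: "jsp_matrix N P"
  shows "real N / (2 * (real N - 1)) * (A N + B N - 1)^2 \<le> loss N A B P"
proof -
  define c where "c = real N - 1"
  have cpos: "c > 0" using N2 c_def by simp
  have cardI: "real (card {1..<N}) = c" using N2 c_def by simp
  have tot: "(\<Sum>i=1..N. \<Sum>j=1..N. P i j) = 1" using P unfolding jsp_matrix_def by auto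
  define x where "x = piA N P N"
  define y where "y = piB N P N"
  have xy: "x + y \<le> 1" using row_col_le[OF P, of N] N2 x_def y_def by simp
  define Q1 where "Q1 = (\<Sum>i\<in>{1..<N}. (piA N P i - A i)^2)"
  define Q2 where "Q2 = (\<Sum>i\<in>{1..<N}. (piB N P i - B i)^2)"
  define u where "u = A N - x"
  define v where "v = B N - y"
  have s1: "(\<Sum>i\<in>{1..<N}. (piA N P i - A i)) = u"
  proof -
    have a: "(\<Sum>i=1..N. piA N P i) = 1" using total_piA tot by simp
    have "(\<Sum>i\<in>{1..<N}. (piA N P i - A i)) = (\<Sum>i\<in>{1..<N}. piA N P i) - (\<Sum>i\<in>{1..<N}. A i)"
      by (simp add: sum_subtractf)
    also have "\<dots> = (1 - x) - (1 - A N)"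
      using a Asum split_last[of N "piA N P"] split_last[of N A] N2 x_def by simp
    finally show ?thesis using u_def by simp
  qed
  have s2: "(\<Sum>i\<in>{1..<N}. (piB N P i - B i)) = v"
  proof -
    have a: "(\<Sum>i=1..N. piB N P i) = 1" using total_piB tot by simp
    have "(\<Sum>i\<in>{1..<N}. (piB N P i - B i)) = (\<Sum>i\<in>{1..<N}. piB N P i) - (\<Sum>i\<in>{1..<N}. B i)"
      by (simp add: sum_subtractf)
    also have "\<dots> = (1 - y) - (1 - B N)"
      using a Bsum split_last[of N "piB N P"] split_last[of N B] N2 y_def by simp
    finally show ?thesis using v_def by simp
  qed
  have q1: "u^2 \<le> c * Q1"
    using cs_sum[of "{1..<N}" "\<lambda>i. piA N P i - A i"] N2 s1 cardI Q1_def by simp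
  have q2: "v^2 \<le> c * Q2"
    using cs_sum[of "{1..<N}" "\<lambda>i. piB N P i - B i"] N2 s2 cardI Q2_def by simp
  have L: "loss N A B P = u^2 + Q1 + v^2 + Q2"
    unfolding loss_def using split_last[of N "\<lambda>i. (piA N P i - A i)^2"]
      split_last[of N "\<lambda>i. (piB N P i - B i)^2"] N2
    by (simp add: Q1_def Q2_def u_def v_def x_def y_def power2_commute)
  have uv: "u + v \<ge> A N + B N - 1" using xy u_def v_def by simp
  have uv2: "(A N + B N - 1)^2 \<le> (u+v)^2"
    using uv S by (intro power_mono) auto
  have uv3: "(u+v)^2 \<le> 2 * (u^2 + v^2)"
  proof -
    have "(u+v)^2 = 2 * (u^2 + v^2) - (u-v)^2" by (simp add: power2_eq_square algebra_simps)
    moreover have "(u-v)^2 \<ge> 0" by simp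
    ultimately show ?thesis by linarith
  qed
    
  have Q1b: "Q1 \<ge> u^2 / c" using q1 cpos by (simp add: field_simps)
  have Q2b: "Q2 \<ge> v^2 / c" using q2 cpos by (simp add: field_simps)
  have "loss N A B P \<ge> (u^2 + v^2) * (1 + 1/c)"
    using L Q1b Q2b by (simp add: algebra_simps add_divide_distrib)
  moreover have "(u^2 + v^2) * (1 + 1/c) \<ge> (A N + B N - 1)^2 / 2 * (1 + 1/c)"
    using uv2 uv3 cpos by (intro mult_right_mono) (auto simp: add_pos_pos)
  moreover have "(A N + B N - 1)^2 / 2 * (1 + 1/c) = real N / (2 * (real N - 1)) * (A N + B N - 1)^2"
    using cpos c_def by (simp add: field_simps)
  ultimately show ?thesis by linarith
qed

theorem theorem2p2:
  fixes N :: nat and A B :: "nat \<Rightarrow> real"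
  assumes N2: "N \<ge> 2"
    and Anonneg: "\<forall>i\<in>{1..N}. A i \<ge> 0" and Asum: "(\<Sum>i=1..N. A i) = 1"
    and Bnonneg: "\<forall>i\<in>{1..N}. B i \<ge> 0" and Bsum: "(\<Sum>i=1..N. B i) = 1"
  shows "((\<exists>i\<in>{1..N}. A i + B i > 1) \<longrightarrow>
            \<not> (\<exists>P. jsp_matrix N P \<and> loss N A B P = 0))
       \<and> ((\<forall>i\<in>{1..N}. A i + B i \<le> A N + B N) \<and> A N + B N > 1 \<longrightarrow>
            (let \<epsilon> = (A N + B N - 1) / (2 * (real N - 1));
                 Pt = (\<lambda>i j. if i \<noteq> N \<and> j \<noteq> N then 0
                              else if i \<noteq> N \<and> j = N then A i + \<epsilon>
                              else if i = N \<and> j \<noteq> N then B j + \<epsilon>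
                              else 0)
             in Lmin N A B = real N / (2 * (real N - 1)) * (A N + B N - 1)^2
                \<and> jsp_matrix N Pt
                \<and> loss N A B Pt = Lmin N A B))"
proof -
  define S where "S = A N + B N"
  define c where "c = real N - 1"
  have cpos: "c > 0" using N2 c_def by simp
  have cardI: "card {1..<N} = N - 1" by simp
  have cardr: "real (card {1..<N}) = c" using N2 c_def by simp
  have N1: "N \<ge> 1" using N2 by simp
  have part1: "(\<exists>i\<in>{1..N}. A i + B i > 1) \<longrightarrow> \<not> (\<exists>P. jsp_matrix N P \<and> loss N A B P = 0)"
  proof (intro impI notI)
    assume "\<exists>i\<in>{1..N}. A i + B i > 1" then obtain k where k: "k \<in> {1..N}" "A k + B k > 1" by auto
    assume "\<exists>P. jsp_matrix N P \<and> loss N A B P = 0"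
    then obtain P where P: "jsp_matrix N P" "loss N A B P = 0" by auto
    have z1: "(\<Sum>i=1..N. (piA N P i - A i)^2) = 0"
     and z2: "(\<Sum>j=1..N. (piB N P j - B j)^2) = 0"
      using P(2) unfolding loss_def
      by (smt (verit) sum_nonneg zero_le_power2)+
    have "(piA N P k - A k)^2 = 0" using z1 k(1) by (subst (asm) sum_nonneg_eq_0_iff) auto
    moreover have "(piB N P k - B k)^2 = 0" using z2 k(1) by (subst (asm) sum_nonneg_eq_0_iff) auto
    ultimately have "piA N P k = A k" "piB N P k = B k" by auto
    then show False using row_col_le[OF P(1) k(1)] k(2) by simp
  qed
  have part2: "(\<forall>i\<in>{1..N}. A i + B i \<le> A N + B N) \<and> A N + B N > 1 \<longrightarrow>
            (let \<epsilon> = (A N + B N - 1) / (2 * (real N - 1));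
                 Pt = (\<lambda>i j. if i \<noteq> N \<and> j \<noteq> N then 0
                              else if i \<noteq> N \<and> j = N then A i + \<epsilon>
                              else if i = N \<and> j \<noteq> N then B j + \<epsilon>
                              else 0)
             in Lmin N A B = real N / (2 * (real N - 1)) * (A N + B N - 1)^2
                \<and> jsp_matrix N Pt
                \<and> loss N A B Pt = Lmin N A B)"
  proof (intro impI)
    assume H: "(\<forall>i\<in>{1..N}. A i + B i \<le> A N + B N) \<and> A N + B N > 1"
    define e where "e = (A N + B N - 1) / (2 * (real N - 1))"
    define Pt where "Pt = (\<lambda>i j. if i \<noteq> N \<and> j \<noteq> N then 0
                              else if i \<noteq> N \<and> j = N then A i + e
                              else if i = N \<and> j \<noteq> N then B j + (e::real)
                              else 0)"
    have epos: "e > 0" using H cpos c_def e_def by simp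
    have ce: "c * e = (S - 1) / 2" using cpos by (simp add: e_def c_def S_def field_simps)
    have sA: "(\<Sum>i\<in>{1..<N}. A i + e) = (1 - A N) + c * e"
      using Asum split_last[OF N1, of A] cardr by (simp add: sum.distrib)
    have sB: "(\<Sum>i\<in>{1..<N}. B i + e) = (1 - B N) + c * e"
      using Bsum split_last[OF N1, of B] cardr by (simp add: sum.distrib)
    have rowi: "piA N Pt i = A i + e" if "i \<in> {1..<N}" for i
    proof -
      have "piA N Pt i = Pt i N + (\<Sum>j\<in>{1..<N}. Pt i j)"
        unfolding piA_def by (rule split_last[OF N1])
      also have "(\<Sum>j\<in>{1..<N}. Pt i j) = 0" using that by (simp add: Pt_def)
      finally show ?thesis using that by (simp add: Pt_def)
    qed
    have rowN: "piA N Pt N = (1 - B N) + c * e"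
    proof -
      have "piA N Pt N = Pt N N + (\<Sum>j\<in>{1..<N}. Pt N j)"
        unfolding piA_def by (rule split_last[OF N1])
      also have "(\<Sum>j\<in>{1..<N}. Pt N j) = (\<Sum>j\<in>{1..<N}. B j + e)"
        by (rule sum.cong) (auto simp: Pt_def)
      finally show ?thesis using sB by (simp add: Pt_def)
    qed
    have coli: "piB N Pt i = B i + e" if "i \<in> {1..<N}" for i
    proof -
      have "piB N Pt i = Pt N i + (\<Sum>j\<in>{1..<N}. Pt j i)"
        unfolding piB_def by (rule split_last[OF N1])
      also have "(\<Sum>j\<in>{1..<N}. Pt j i) = 0" using that by (simp add: Pt_def)
      finally show ?thesis using that by (simp add: Pt_def)
    qed
    have colN: "piB N Pt N = (1 - A N) + c * e"
    proof -
      have "piB N Pt N = Pt N N + (\<Sum>j\<in>{1..<N}. Pt j N)"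
        unfolding piB_def by (rule split_last[OF N1])
      also have "(\<Sum>j\<in>{1..<N}. Pt j N) = (\<Sum>j\<in>{1..<N}. A j + e)"
        by (rule sum.cong) (auto simp: Pt_def)
      finally show ?thesis using sA by (simp add: Pt_def)
    qed
    have tot: "(\<Sum>i=1..N. \<Sum>j=1..N. Pt i j) = 1"
    proof -
      have "(\<Sum>i=1..N. \<Sum>j=1..N. Pt i j) = (\<Sum>i=1..N. piA N Pt i)" by (simp add: piA_def)
      also have "\<dots> = piA N Pt N + (\<Sum>i\<in>{1..<N}. piA N Pt i)" by (rule split_last[OF N1])
      also have "(\<Sum>i\<in>{1..<N}. piA N Pt i) = (\<Sum>i\<in>{1..<N}. A i + e)"
        by (rule sum.cong) (auto simp: rowi)
      finally show ?thesis using sA rowN ce S_def by simp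
    qed
    have jsp: "jsp_matrix N Pt"
      unfolding jsp_matrix_def using tot Anonneg Bnonneg epos
      by (auto simp: Pt_def add_nonneg_nonneg less_imp_le)
    have l1: "(\<Sum>i=1..N. (piA N Pt i - A i)^2) = ((S - 1)/2)^2 + c * e^2"
    proof -
      have "(\<Sum>i=1..N. (piA N Pt i - A i)^2) = (piA N Pt N - A N)^2 + (\<Sum>i\<in>{1..<N}. (piA N Pt i - A i)^2)"
        by (rule split_last[OF N1])
      also have "(\<Sum>i\<in>{1..<N}. (piA N Pt i - A i)^2) = (\<Sum>i\<in>{1..<N}. e^2)"
        by (rule sum.cong) (auto simp: rowi)
      also have "(piA N Pt N - A N) = - ((S - 1)/2)" using rowN ce S_def by (simp add: field_simps)
      finally show ?thesis using cardr by simp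
    qed
    have l2: "(\<Sum>i=1..N. (piB N Pt i - B i)^2) = ((S - 1)/2)^2 + c * e^2"
    proof -
      have "(\<Sum>i=1..N. (piB N Pt i - B i)^2) = (piB N Pt N - B N)^2 + (\<Sum>i\<in>{1..<N}. (piB N Pt i - B i)^2)"
        by (rule split_last[OF N1])
      also have "(\<Sum>i\<in>{1..<N}. (piB N Pt i - B i)^2) = (\<Sum>i\<in>{1..<N}. e^2)"
        by (rule sum.cong) (auto simp: coli)
      also have "(piB N Pt N - B N) = - ((S - 1)/2)" using colN ce S_def by (simp add: field_simps)
      finally show ?thesis using cardr by simp
    qed
    have lossPt: "loss N A B Pt = real N / (2 * (real N - 1)) * (A N + B N - 1)^2"
    proof -
      have "loss N A B Pt = 2 * ((S - 1)/2)^2 + 2 * c * e^2" using l1 l2 by (simp add: loss_def)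
      also have "\<dots> = real N / (2 * (real N - 1)) * (A N + B N - 1)^2"
      proof -
        have g: "\<And>t c::real. c > 0 \<Longrightarrow> 2 * (t/2)^2 + 2 * c * (t / (2*c))^2 = (c+1) / (2*c) * t^2"
        proof -
          fix t c :: real assume c: "c > 0"
          have a: "2 * (t/2)^2 = t^2/2" by (simp add: power_divide)
          have b: "2 * c * (t / (2*c))^2 = t^2/(2*c)" using c by (simp add: power_divide power2_eq_square)
          have d: "(c+1) / (2*c) * t^2 = t^2/2 + t^2/(2*c)" using c by (simp add: divide_simps algebra_simps)
          show "2 * (t/2)^2 + 2 * c * (t / (2*c))^2 = (c+1) / (2*c) * t^2" using a b d by simp
        qed
        have "e = (S - 1) / (2 * c)" by (simp add: e_def S_def c_def)
        then have h: "2 * ((S - 1)/2)^2 + 2 * c * e^2 = (c+1) / (2*c) * (S - 1)^2"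
          using g[OF cpos, of "S - 1"] by simp
        have c1: "c + 1 = real N" and c2: "2 * c = 2 * (real N - 1)" by (simp_all add: c_def)
        have "2 * ((S - 1)/2)^2 + 2 * c * e^2 = real N / (2 * (real N - 1)) * (S - 1)^2"
          using h by (simp only: c1 c2)
        then show ?thesis by (simp only: S_def)
      qed
      finally show ?thesis .
    qed
    have lm: "Lmin N A B = real N / (2 * (real N - 1)) * (A N + B N - 1)^2"
      unfolding Lmin_def
    proof (rule cInf_eq_minimum)
      show "real N / (2 * (real N - 1)) * (A N + B N - 1)^2 \<in> {loss N A B P |P. jsp_matrix N P}"
        using jsp lossPt[symmetric] by blast
    next
      fix y assume "y \<in> {loss N A B P |P. jsp_matrix N P}"
      then obtain P where "jsp_matrix N P" "y = loss N A B P" by auto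
      then show "real N / (2 * (real N - 1)) * (A N + B N - 1)^2 \<le> y"
        using lower_bound[OF N2 Asum Bsum] H by simp
    qed
    show "let \<epsilon> = (A N + B N - 1) / (2 * (real N - 1));
                 Pt = (\<lambda>i j. if i \<noteq> N \<and> j \<noteq> N then 0
                              else if i \<noteq> N \<and> j = N then A i + \<epsilon>
                              else if i = N \<and> j \<noteq> N then B j + \<epsilon>
                              else 0)
             in Lmin N A B = real N / (2 * (real N - 1)) * (A N + B N - 1)^2
                \<and> jsp_matrix N Pt
                \<and> loss N A B Pt = Lmin N A B"
      unfolding Let_def e_def[symmetric] Pt_def[symmetric] using lm jsp lossPt by simp
  qed
  show ?thesis using part1 part2 by blast
qed

end
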